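(* Fix a level $1\le l\le L$, a threshold $\eta>0$ and $\alpha\in\{1,2,3\}$. For each $1\le i\le P_l$: - assume $\ker\overline a_{l,i}\cap\ker\overline b^\alpha_{l,i}=\{0\}$; - let $(\lambda_{i,k},p_{i,k})_{k=1}^{n_i}$ be eigenpairs of $(\overline a_{l,i},\overline b^\alpha_{l,i})$ on $\overline V_{h,l,i}$ ($n_i=\dim\overline V_{h,l,i}$), normalized and ordered as described below; - let $m_i=\#\{k:\lambda_{i,k}<\eta\}$ and $\Pi_iw=\sum_{k=1}^{m_i}\overline b^\alpha_{l,i}(w,p_{i,k})\,p_{i,k}$. Assume $V_{h,l-1}\supseteq\operatorname{span}\{e_{l,i}\chi_{l,i}p_{i,k}:1\le i\le P_l,\ k\le m_i\}$. For $v_l\in V_{h,l}$ define $$v_{l,i}=e_{l,i}\chi_{l,i}(I-\Pi_i)r_{l,i}v_l,\qquad v_{l-1}=\sum_{i=1}^{P_l}e_{l,i}\chi_{l,i}\Pi_ir_{l,i}v_l.$$ Then: - $v_l=v_{l-1}+\sum_i v_{l,i}$, with $v_{l-1}\in V_{h,l-1}$ and $v_{l,i}\in V_{h,l,i}$; - for all $i$, $\|v_{l,i}\|_{a_h}^2\le C_1^\alpha\,\overline a_{l,i}(r_{l,i}v_l,r_{l,i}v_l)$, where $$C_1^1=\eta^{-1},\qquad C_1^2=1+\eta^{-1},\qquad C_1^3=2(1+\eta^{-1}).$$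
   Context: Let $\Omega\subset\mathbb R^d$ ($d=2,3$) be a bounded polyhedral domain and $\Gamma_D\subseteq\partial\Omega$. Let $\mathcal T_h$ be a conforming shape-regular mesh of $\Omega$ of open elements. Let $K$ be a symmetric, uniformly positive definite and bounded coefficient. Let $V_h\subset H^1(\Omega)$ be a conforming finite element space on $\mathcal T_h$ with zero trace on $\Gamma_D$. Set $a_\tau(u,v)=\int_\tau(K\nabla u)\cdot\nabla v\,dx$ and $a_h=\sum_{\tau\in\mathcal T_h}a_\tau$ (positive definite on $V_h$), with $\|v\|_{a_h}=\sqrt{a_h(v,v)}$. Decomposition on level $l$: sets $\mathcal T_{h,l,i}\subseteq\mathcal T_h$, $i=1,\dots,P_l$, covering $\mathcal T_h$; $\Omega_{l,i}$ is the interior of $\bigcup_{\tau\in\mathcal T_{h,l,i}}\overline\tau$. Let $V_{h,l-1}\subseteq V_{h,l}\subseteq V_h$ be subspaces. Further: - $\overline V_{h,l,i}=\{v|_{\Omega_{l,i}}:v\in V_{h,l}\}$ and $r_{l,i}v=v|_{\Omega_{l,i}}$; - $V_{h,l,i}=\{v\in V_{h,l}:\operatorname{supp}v\subseteq\overline{\Omega_{l,i}}\}$; - $e_{l,i}$ is extension by zero outside $\Omega_{l,i}$; - $\overline a_{l,i}(u,v)=\sum_{\tau\in\mathcal T_{h,l,i}}a_\tau(u,v)$; - $\mathring{\mathcal T}_{h,l,i}=\{\tau\in\mathcal T_{h,l,i}:\tau\in\mathcal T_{h,l,j}\text{ for some }j\ne i\}$ and $\mathring a_{l,i}(u,v)=\sum_{\tau\in\mathring{\mathcal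 T}_{h,l,i}}a_\tau(u,v)$. Partition of unity: linear maps $\chi_{l,i}:\overline V_{h,l,i}\to\overline V_{h,l,i}$ such that: - $e_{l,i}\chi_{l,i}w\in V_{h,l,i}$ for all $w\in\overline V_{h,l,i}$ (in particular $\chi_{l,i}w$ vanishes on $\partial\Omega_{l,i}\cap\Omega$); - $\sum_{i=1}^{P_l}e_{l,i}\chi_{l,i}r_{l,i}v=v$ for all $v\in V_{h,l}$; - $(\chi_{l,i}w)|_\tau=w|_\tau$ for every $\tau\in\mathcal T_{h,l,i}\setminus\mathring{\mathcal T}_{h,l,i}$. Right-hand side forms on $\overline V_{h,l,i}$: - $\overline b^1_{l,i}(u,v)=\overline a_{l,i}(\chi_{l,i}u,\chi_{l,i}v)$; - $\overline b^2_{l,i}(u,v)=\mathring a_{l,i}(\chi_{l,i}u,\chi_{l,i}v)$; - $\overline b^3_{l,i}(u,v)=\overline a_{l,i}(u-\chi_{l,i}u,v-\chi_{l,i}v)$. Eigenpairs: $(\lambda,p)$ with $p\ne0$ is an eigenpair of $(a,b)$ if either $p\notin\ker b$ and $a(p,v)=\lambda b(p,v)$ for all $v$, or $p\in\ker b$ and $\lambda=+\infty$. Normalization and ordering: eigenvalues are ordered nondecreasingly; the eigenvectors form a pairwise $\overline a_{l,i}$-orthogonal basis; those with finite eigenvalue are $\overline b^\alpha_{l,i}$-orthonormal; those with eigenvalue $+\infty$ lie in $\ker\overline b^\alpha_{l,i}$. *)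

theory Defs
  imports "HOL-Analysis.Analysis" "HOL-Library.Function_Algebras"
begin

definition fscale :: "real \<Rightarrow> ('a \<Rightarrow> real) \<Rightarrow> ('a \<Rightarrow> real)" where
  "fscale c f = (\<lambda>x. c * f x)"

abbreviation fsubspace :: "('a \<Rightarrow> real) set \<Rightarrow> bool" where
  "fsubspace \<equiv> module.subspace fscale"

abbreviation fspan :: "('a \<Rightarrow> real) set \<Rightarrow> ('a \<Rightarrow> real) set" where
  "fspan \<equiv> module.span fscale"

abbreviation fdependent :: "('a \<Rightarrow> real) set \<Rightarrow> bool" where
  "fdependent \<equiv> module.dependent fscale"

abbreviation fdim :: "('a \<Rightarrow> real) set \<Rightarrow> nat" where
  "fdim \<equiv> vector_space.dim fscale"

definition linear_on_set :: "('a \<Rightarrow> real) set \<Rightarrow> (('a \<Rightarrow> real) \<Rightarrow> ('a \<Rightarrow> real)) \<Rightarrow> bool" where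
  "linear_on_set S f \<longleftrightarrow> (\<forall>u\<in>S. \<forall>w\<in>S. f (u + w) = f u + f w) \<and>
                          (\<forall>c. \<forall>u\<in>S. f (fscale c u) = fscale c (f u))"

definition conforming_mesh :: "(real^'d) set set \<Rightarrow> (real^'d) set \<Rightarrow> bool" where
  "conforming_mesh Th \<Omega> \<longleftrightarrow> finite Th \<and> Th \<noteq> {} \<and>
     (\<forall>\<tau>\<in>Th. open \<tau> \<and> \<tau> \<noteq> {} \<and> polytope (closure \<tau>) \<and> \<tau> = interior (closure \<tau>)) \<and>
     (\<forall>\<tau>\<in>Th. \<forall>\<tau>'\<in>Th. \<tau> \<noteq> \<tau>' \<longrightarrow> \<tau> \<inter> \<tau>' = {} \<and>
         (closure \<tau> \<inter> closure \<tau>') face_of closure \<tau> \<and>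
         (closure \<tau> \<inter> closure \<tau>') face_of closure \<tau>') \<and>
     \<Omega> = interior (\<Union>\<tau>\<in>Th. closure \<tau>) \<and> connected \<Omega>"

definition admissible_coeff :: "(real^'d \<Rightarrow> real^'d^'d) \<Rightarrow> (real^'d) set \<Rightarrow> bool" where
  "admissible_coeff K \<Omega> \<longleftrightarrow>
     (\<forall>x\<in>\<Omega>. transpose (K x) = K x) \<and>
     (\<exists>c>0. \<forall>x\<in>\<Omega>. \<forall>\<xi>. c * (norm \<xi>)\<^sup>2 \<le> \<xi> \<bullet> (K x *v \<xi>)) \<and>
     (\<exists>C. \<forall>x\<in>\<Omega>. \<forall>\<xi>. norm (K x *v \<xi>) \<le> C * norm \<xi>)"

definition grad :: "(real^'d \<Rightarrow> real) \<Rightarrow> real^'d \<Rightarrow> real^'d" where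
  "grad f x = (SOME g. (f has_derivative (\<lambda>h. g \<bullet> h)) (at x))"

definition a_elem :: "(real^'d \<Rightarrow> real^'d^'d) \<Rightarrow> (real^'d) set \<Rightarrow>
     (real^'d \<Rightarrow> real) \<Rightarrow> (real^'d \<Rightarrow> real) \<Rightarrow> real" where
  "a_elem K \<tau> u v = integral \<tau> (\<lambda>x. (K x *v grad u x) \<bullet> grad v x)"

text \<open>Sum of element forms over a set of elements (a_h for Th, bar a_{l,i} for T_{h,l,i},
  ring a_{l,i} for the overlap elements).\<close>
definition a_sum :: "(real^'d \<Rightarrow> real^'d^'d) \<Rightarrow> (real^'d) set set \<Rightarrow>
     (real^'d \<Rightarrow> real) \<Rightarrow> (real^'d \<Rightarrow> real) \<Rightarrow> real" where
  "a_sum K Ts u v = (\<Sum>\<tau>\<in>Ts. a_elem K \<tau> u v)"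

text \<open>Representation convention: a function on Omega is stored by its values on the
  open elements (and 0 elsewhere); H^1-conformity of the piecewise smooth
  functions is expressed by a continuous extension to the closure of Omega,
  whose trace vanishes on Gamma_D.\<close>
definition fe_space :: "(real^'d) set set \<Rightarrow> (real^'d) set \<Rightarrow> (real^'d) set \<Rightarrow>
     (real^'d \<Rightarrow> real^'d^'d) \<Rightarrow> (real^'d \<Rightarrow> real) set \<Rightarrow> bool" where
  "fe_space Th \<Omega> \<Gamma>D K V \<longleftrightarrow>
     fsubspace V \<and> (\<exists>B. finite B \<and> fspan B = V) \<and>
     (\<forall>v\<in>V. (\<forall>x. x \<notin> \<Union>Th \<longrightarrow> v x = 0) \<and>
            (\<exists>g. continuous_on (closure \<Omega>) g \<and> (\<forall>x\<in>\<Union>Th. g x = v x) \<and> (\<forall>x\<in>\<Gamma>D. g x = 0)) \<and>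
            (\<forall>\<tau>\<in>Th. \<forall>x\<in>\<tau>. v differentiable (at x))) \<and>
     (\<forall>u\<in>V. \<forall>v\<in>V. \<forall>\<tau>\<in>Th. (\<lambda>x. (K x *v grad u x) \<bullet> grad v x) integrable_on \<tau>)"

definition subdom :: "(real^'d) set set \<Rightarrow> (real^'d) set" where
  "subdom Ts = interior (\<Union>\<tau>\<in>Ts. closure \<tau>)"

definition restr :: "'a set \<Rightarrow> ('a \<Rightarrow> real) \<Rightarrow> ('a \<Rightarrow> real)" where
  "restr U v = (\<lambda>x. if x \<in> U then v x else 0)"

definition ext0 :: "'a set \<Rightarrow> ('a \<Rightarrow> real) \<Rightarrow> ('a \<Rightarrow> real)" where
  "ext0 U w = (\<lambda>x. if x \<in> U then w x else 0)"

definition loc_space :: "('a \<Rightarrow> real) set \<Rightarrow> 'a set \<Rightarrow> ('a \<Rightarrow> real) set" where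
  "loc_space V U = restr U ` V"

definition supp_space :: "('a::topological_space \<Rightarrow> real) set \<Rightarrow> 'a set \<Rightarrow> ('a \<Rightarrow> real) set" where
  "supp_space V U = {v\<in>V. closure {x. v x \<noteq> 0} \<subseteq> closure U}"

definition overlap_elems :: "(nat \<Rightarrow> 'b set) \<Rightarrow> nat \<Rightarrow> nat \<Rightarrow> 'b set" where
  "overlap_elems T P i = {\<tau>\<in>T i. \<exists>j\<in>{1..P}. j \<noteq> i \<and> \<tau> \<in> T j}"

definition b_form :: "nat \<Rightarrow> (real^'d \<Rightarrow> real^'d^'d) \<Rightarrow> (nat \<Rightarrow> (real^'d) set set) \<Rightarrow> nat \<Rightarrow> nat \<Rightarrow>
     ((real^'d \<Rightarrow> real) \<Rightarrow> (real^'d \<Rightarrow> real)) \<Rightarrow> (real^'d \<Rightarrow> real) \<Rightarrow> (real^'d \<Rightarrow> real) \<Rightarrow> real" where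
  "b_form \<alpha> K T P i chi u v =
     (if \<alpha> = 1 then a_sum K (T i) (chi u) (chi v)
      else if \<alpha> = 2 then a_sum K (overlap_elems T P i) (chi u) (chi v)
      else a_sum K (T i) (u - chi u) (v - chi v))"

definition form_ker :: "'f set \<Rightarrow> ('f \<Rightarrow> 'f \<Rightarrow> real) \<Rightarrow> 'f set" where
  "form_ker S b = {p\<in>S. \<forall>v\<in>S. b p v = 0}"

definition eigenpair :: "('a \<Rightarrow> real) set \<Rightarrow> (('a \<Rightarrow> real) \<Rightarrow> ('a \<Rightarrow> real) \<Rightarrow> real) \<Rightarrow>
     (('a \<Rightarrow> real) \<Rightarrow> ('a \<Rightarrow> real) \<Rightarrow> real) \<Rightarrow> ereal \<Rightarrow> ('a \<Rightarrow> real) \<Rightarrow> bool" where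
  "eigenpair S a b lmb p \<longleftrightarrow> p \<in> S \<and> p \<noteq> 0 \<and>
     ((p \<notin> form_ker S b \<and> (\<exists>r. lmb = ereal r \<and> (\<forall>v\<in>S. a p v = r * b p v))) \<or>
      (p \<in> form_ker S b \<and> lmb = \<infinity>))"

definition normalized_eigenbasis :: "('a \<Rightarrow> real) set \<Rightarrow> (('a \<Rightarrow> real) \<Rightarrow> ('a \<Rightarrow> real) \<Rightarrow> real) \<Rightarrow>
     (('a \<Rightarrow> real) \<Rightarrow> ('a \<Rightarrow> real) \<Rightarrow> real) \<Rightarrow> nat \<Rightarrow> (nat \<Rightarrow> ereal) \<Rightarrow> (nat \<Rightarrow> ('a \<Rightarrow> real)) \<Rightarrow> bool" where
  "normalized_eigenbasis S a b n lam p \<longleftrightarrow>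
     n = fdim S \<and> inj_on p {1..n} \<and> \<not> fdependent (p ` {1..n}) \<and> fspan (p ` {1..n}) = S \<and>
     (\<forall>k\<in>{1..n}. eigenpair S a b (lam k) (p k)) \<and>
     (\<forall>j\<in>{1..n}. \<forall>k\<in>{1..n}. j \<noteq> k \<longrightarrow> a (p j) (p k) = 0) \<and>
     (\<forall>j\<in>{1..n}. \<forall>k\<in>{1..n}. lam j \<noteq> \<infinity> \<and> lam k \<noteq> \<infinity> \<longrightarrow>
          b (p j) (p k) = (if j = k then 1 else 0)) \<and>
     (\<forall>k\<in>{1..n}. lam k = \<infinity> \<longrightarrow> p k \<in> form_ker S b) \<and>
     (\<forall>j\<in>{1..n}. \<forall>k\<in>{1..n}. j \<le> k \<longrightarrow> lam j \<le> lam k)"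

definition n_small :: "nat \<Rightarrow> (nat \<Rightarrow> ereal) \<Rightarrow> real \<Rightarrow> nat" where
  "n_small n lam \<eta> = card {k\<in>{1..n}. lam k < ereal \<eta>}"

definition proj_op :: "(('a \<Rightarrow> real) \<Rightarrow> ('a \<Rightarrow> real) \<Rightarrow> real) \<Rightarrow> nat \<Rightarrow> (nat \<Rightarrow> ('a \<Rightarrow> real)) \<Rightarrow>
     ('a \<Rightarrow> real) \<Rightarrow> ('a \<Rightarrow> real)" where
  "proj_op b m p w = (\<Sum>k\<in>{1..m}. fscale (b w (p k)) (p k))"

definition C1 :: "nat \<Rightarrow> real \<Rightarrow> real" where
  "C1 \<alpha> \<eta> = (if \<alpha> = 1 then 1 / \<eta> else if \<alpha> = 2 then 1 + 1 / \<eta> else 2 * (1 + 1 / \<eta>))"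

end

theory Submission
  imports Defs
begin



lemma module_fscale: "module (fscale :: real \<Rightarrow> ('a \<Rightarrow> real) \<Rightarrow> _)"
  by unfold_locales (auto simp: fscale_def fun_eq_iff algebra_simps)

lemma fscale_apply: "fscale c f x = c * f x" by (simp add: fscale_def)

lemma grad_unique:
  assumes "(f has_derivative (\<lambda>h. g \<bullet> h)) (at x)"
  shows "grad f x = g"
proof -
  have ex: "\<exists>g. (f has_derivative (\<lambda>h. g \<bullet> h)) (at x)" using assms by blast
  have "(f has_derivative (\<lambda>h. grad f x \<bullet> h)) (at x)"
    unfolding grad_def by (rule someI_ex[OF ex])
  from has_derivative_unique[OF this assms]
  have "(\<lambda>h. grad f x \<bullet> h) = (\<lambda>h. g \<bullet> h)" .
  then have "(grad f x - g) \<bullet> (grad f x - g) = 0"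
    by (metis inner_diff_left right_minus_eq)
  then show ?thesis by simp
qed

lemma grad_works:
  fixes f :: "real^'d \<Rightarrow> real"
  assumes "f differentiable (at x)"
  shows "(f has_derivative (\<lambda>h. grad f x \<bullet> h)) (at x)"
proof -
  obtain f' where f': "(f has_derivative f') (at x)" using assms differentiable_def by blast
  have lin: "linear f'" using f' has_derivative_linear by blast
  have "f' = (\<lambda>h. adjoint f' 1 \<bullet> h)"
  proof
    fix h show "f' h = adjoint f' 1 \<bullet> h"
      using adjoint_works[OF lin, of h 1] by (simp add: inner_commute)
  qed
  with f' have "(f has_derivative (\<lambda>h. adjoint f' 1 \<bullet> h)) (at x)" by simp
  with grad_unique[OF this] show ?thesis by simp
qed

lemma grad_local:
  assumes "open U" "x \<in> U" "\<And>y. y \<in> U \<Longrightarrow> f y = g y"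
  shows "grad f x = grad g x"
proof -
  have "\<And>g'. (f has_derivative (\<lambda>h. g' \<bullet> h)) (at x) \<longleftrightarrow> (g has_derivative (\<lambda>h. g' \<bullet> h)) (at x)"
    using has_derivative_transform_within_open[OF _ assms(1,2), of f _ UNIV g]
          has_derivative_transform_within_open[OF _ assms(1,2), of g _ UNIV f] assms(3)
    by (metis)
  then show ?thesis unfolding grad_def by simp
qed

lemma diff_local:
  assumes "open U" "x \<in> U" "\<And>y. y \<in> U \<Longrightarrow> f y = g y" "f differentiable (at x)"
  shows "g differentiable (at x)"
  using assms has_derivative_transform_within_open unfolding differentiable_def by metis

lemma grad_add:
  fixes f g :: "real^'d \<Rightarrow> real"
  assumes "f differentiable (at x)" "g differentiable (at x)"
  shows "grad (f + g) x = grad f x + grad g x" "(f + g) differentiable (at x)"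
proof -
  have "((\<lambda>y. f y + g y) has_derivative (\<lambda>h. grad f x \<bullet> h + grad g x \<bullet> h)) (at x)"
    by (intro has_derivative_add grad_works assms)
  then have d: "((f + g) has_derivative (\<lambda>h. (grad f x + grad g x) \<bullet> h)) (at x)"
    by (simp add: inner_add_left plus_fun_def)
  show "grad (f + g) x = grad f x + grad g x" by (rule grad_unique[OF d])
  show "(f + g) differentiable (at x)" using d differentiable_def by blast
qed

lemma grad_scale:
  fixes f :: "real^'d \<Rightarrow> real"
  assumes "f differentiable (at x)"
  shows "grad (fscale c f) x = c *\<^sub>R grad f x" "(fscale c f) differentiable (at x)"
proof -
  have "((\<lambda>y. c * f y) has_derivative (\<lambda>h. c * (grad f x \<bullet> h))) (at x)"
    by (intro has_derivative_mult_right grad_works assms)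
  then have d: "((fscale c f) has_derivative (\<lambda>h. (c *\<^sub>R grad f x) \<bullet> h)) (at x)"
    by (simp add: fscale_def)
  show "grad (fscale c f) x = c *\<^sub>R grad f x" by (rule grad_unique[OF d])
  show "(fscale c f) differentiable (at x)" using d differentiable_def by blast
qed

lemma sym_mv: fixes K :: "real^'d^'d" assumes "transpose K = K"
  shows "(K *v a) \<bullet> b = (K *v b) \<bullet> a"
proof -
  have "(K *v a) \<bullet> b = (\<Sum>i\<in>UNIV. \<Sum>j\<in>UNIV. K$i$j * a$j * b$i)"
    by (simp add: inner_vec_def matrix_vector_mult_def sum_distrib_right)
  also have "\<dots> = (\<Sum>j\<in>UNIV. \<Sum>i\<in>UNIV. K$i$j * a$j * b$i)" by (rule sum.swap)
  also have "\<dots> = (K *v b) \<bullet> a"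
    using assms by (simp add: inner_vec_def matrix_vector_mult_def sum_distrib_right
        transpose_def vec_eq_iff sum_distrib_left mult.commute mult.left_commute)
  finally show ?thesis .
qed

lemma sum_fun_apply: "(sum f A) x = (\<Sum>a\<in>A. f a x)"
  by (induction A rule: infinite_finite_induct) auto

definition good :: "(real^'d \<Rightarrow> real^'d^'d) \<Rightarrow> (real^'d) set \<Rightarrow> (real^'d \<Rightarrow> real) set \<Rightarrow> bool" where
  "good K \<tau> F \<longleftrightarrow> open \<tau> \<and> (\<forall>x\<in>\<tau>. transpose (K x) = K x) \<and> (\<forall>x\<in>\<tau>. \<forall>\<xi>. 0 \<le> \<xi> \<bullet> (K x *v \<xi>)) \<and>
     (\<forall>f\<in>F. \<forall>x\<in>\<tau>. f differentiable (at x)) \<and>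
     (\<forall>f\<in>F. \<forall>g\<in>F. (\<lambda>x. (K x *v grad f x) \<bullet> grad g x) integrable_on \<tau>)"

lemma a_elem_add:
  assumes "good K \<tau> F" "f \<in> F" "g \<in> F" "h \<in> F"
  shows "a_elem K \<tau> (f + g) h = a_elem K \<tau> f h + a_elem K \<tau> g h"
proof -
  have "a_elem K \<tau> (f + g) h = integral \<tau> (\<lambda>x. (K x *v grad f x) \<bullet> grad h x + (K x *v grad g x) \<bullet> grad h x)"
    unfolding a_elem_def
    apply (rule integral_cong)
    using assms unfolding good_def
    by (simp add: grad_add matrix_vector_right_distrib inner_add_left)
  also have "\<dots> = a_elem K \<tau> f h + a_elem K \<tau> g h"
    unfolding a_elem_def using assms unfolding good_def by (intro integral_add) auto
  finally show ?thesis .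
qed

lemma a_elem_scale:
  assumes "good K \<tau> F" "f \<in> F"
  shows "a_elem K \<tau> (fscale c f) h = c * a_elem K \<tau> f h"
proof -
  have "a_elem K \<tau> (fscale c f) h = integral \<tau> (\<lambda>x. c *\<^sub>R ((K x *v grad f x) \<bullet> grad h x))"
    unfolding a_elem_def
    apply (rule integral_cong)
    using assms unfolding good_def
    by (simp add: grad_scale matrix_vector_mult_scaleR inner_scaleR_left)
  also have "\<dots> = c * a_elem K \<tau> f h"
    unfolding a_elem_def by simp
  finally show ?thesis .
qed

lemma a_elem_sym:
  assumes "good K \<tau> F"
  shows "a_elem K \<tau> f g = a_elem K \<tau> g f"
  unfolding a_elem_def
  apply (rule integral_cong)
  using assms sym_mv unfolding good_def by blast

lemma a_elem_nonneg:
  assumes "good K \<tau> F" "f \<in> F"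
  shows "0 \<le> a_elem K \<tau> f f"
  unfolding a_elem_def
  apply (rule integral_nonneg)
  using assms unfolding good_def by (auto simp: inner_commute)


declare plus_fun_apply[simp del] zero_fun_apply[simp del] times_fun_apply[simp del] one_fun_apply[simp del]

definition bilin :: "('a \<Rightarrow> real) set \<Rightarrow> (('a \<Rightarrow> real) \<Rightarrow> ('a \<Rightarrow> real) \<Rightarrow> real) \<Rightarrow> bool" where
  "bilin S Q \<longleftrightarrow> (\<forall>u\<in>S. \<forall>v\<in>S. \<forall>w\<in>S. Q (u + v) w = Q u w + Q v w) \<and>
     (\<forall>c. \<forall>u\<in>S. \<forall>w\<in>S. Q (fscale c u) w = c * Q u w) \<and> (\<forall>u\<in>S. \<forall>v\<in>S. Q u v = Q v u)"

definition psd :: "('a \<Rightarrow> real) set \<Rightarrow> (('a \<Rightarrow> real) \<Rightarrow> ('a \<Rightarrow> real) \<Rightarrow> real) \<Rightarrow> bool" where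
  "psd S Q \<longleftrightarrow> (\<forall>u\<in>S. 0 \<le> Q u u)"

lemma sub_add: "fsubspace S \<Longrightarrow> u \<in> S \<Longrightarrow> v \<in> S \<Longrightarrow> u + v \<in> S"
  using module.subspace_add[OF module_fscale] by blast
lemma sub_scale: "fsubspace S \<Longrightarrow> u \<in> S \<Longrightarrow> fscale c u \<in> S"
  using module.subspace_scale[OF module_fscale] by blast
lemma sub_zero: "fsubspace S \<Longrightarrow> 0 \<in> S"
  using module.subspace_0[OF module_fscale] by blast
lemma fminus_eq: "u - v = u + fscale (-1) v"
  by (simp add: fun_eq_iff fscale_apply plus_fun_apply)
lemma sub_diff: "fsubspace S \<Longrightarrow> u \<in> S \<Longrightarrow> v \<in> S \<Longrightarrow> u - v \<in> S"
  unfolding fminus_eq by (intro sub_add sub_scale)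
lemma sub_sum: "fsubspace S \<Longrightarrow> (\<And>k. k \<in> I \<Longrightarrow> x k \<in> S) \<Longrightarrow> (\<Sum>k\<in>I. fscale (a k) (x k)) \<in> S"
  by (rule module.subspace_sum[OF module_fscale]) (auto intro: sub_scale)

lemma bilin_add: "bilin S Q \<Longrightarrow> u \<in> S \<Longrightarrow> v \<in> S \<Longrightarrow> w \<in> S \<Longrightarrow> Q (u + v) w = Q u w + Q v w"
  unfolding bilin_def by blast
lemma bilin_scale: "bilin S Q \<Longrightarrow> u \<in> S \<Longrightarrow> w \<in> S \<Longrightarrow> Q (fscale c u) w = c * Q u w"
  unfolding bilin_def by blast
lemma bilin_sym: "bilin S Q \<Longrightarrow> u \<in> S \<Longrightarrow> v \<in> S \<Longrightarrow> Q u v = Q v u"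
  unfolding bilin_def by blast

lemma bilin_zero: "bilin S Q \<Longrightarrow> y \<in> S \<Longrightarrow> Q 0 y = 0"
proof -
  assume b: "bilin S Q" and y: "y \<in> S"
  have "fscale 0 y = 0" by (simp add: fun_eq_iff fscale_apply zero_fun_apply)
  then show ?thesis using b y unfolding bilin_def by (metis mult_zero_left)
qed

lemma bilin_sum_left:
  assumes b: "bilin S Q" and sub: "fsubspace S" and fin: "finite I"
    and x: "\<And>k. k \<in> I \<Longrightarrow> x k \<in> S" and y: "y \<in> S"
  shows "Q (\<Sum>k\<in>I. fscale (a k) (x k)) y = (\<Sum>k\<in>I. a k * Q (x k) y)"
  using fin x
proof (induction I rule: finite_induct)
  case empty then show ?case using bilin_zero[OF b y] by (simp only: sum.empty)
next
  case (insert k I)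
  have xs: "(\<Sum>k\<in>I. fscale (a k) (x k)) \<in> S" by (rule sub_sum[OF sub]) (use insert in auto)
  have xk: "x k \<in> S" using insert by auto
  have e1: "Q (\<Sum>k\<in>insert k I. fscale (a k) (x k)) y = Q (fscale (a k) (x k) + (\<Sum>k\<in>I. fscale (a k) (x k))) y"
    by (subst sum.insert[OF insert.hyps(1,2)]) (rule refl)
  also have "\<dots> = a k * Q (x k) y + Q (\<Sum>k\<in>I. fscale (a k) (x k)) y"
    using bilin_add[OF b sub_scale[OF sub xk] xs y] bilin_scale[OF b xk y] by simp
  finally have e1': "Q (\<Sum>k\<in>insert k I. fscale (a k) (x k)) y = a k * Q (x k) y + Q (\<Sum>k\<in>I. fscale (a k) (x k)) y" .
  have e2: "Q (\<Sum>k\<in>I. fscale (a k) (x k)) y = (\<Sum>k\<in>I. a k * Q (x k) y)"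
    using insert.prems by (intro insert.IH) auto
  have e3: "(\<Sum>k\<in>insert k I. a k * Q (x k) y) = a k * Q (x k) y + (\<Sum>k\<in>I. a k * Q (x k) y)"
    by (rule sum.insert[OF insert.hyps(1,2)])
  show ?case using e1' e2 e3 by linarith
qed

lemma diag_quad:
  assumes b: "bilin S Q" and sub: "fsubspace S" and fin: "finite I"
    and x: "\<And>k. k \<in> I \<Longrightarrow> x k \<in> S"
    and d: "\<And>k j. k \<in> I \<Longrightarrow> j \<in> I \<Longrightarrow> Q (x k) (x j) = (if k = j then q k else 0)"
  shows "Q (\<Sum>k\<in>I. fscale (a k) (x k)) (\<Sum>j\<in>I. fscale (bb j) (x j)) = (\<Sum>k\<in>I. a k * bb k * q k)"
proof -
  have ys: "(\<Sum>j\<in>I. fscale (bb j) (x j)) \<in> S" using sub_sum[OF sub] x by auto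
  have "Q (\<Sum>k\<in>I. fscale (a k) (x k)) (\<Sum>j\<in>I. fscale (bb j) (x j))
      = (\<Sum>k\<in>I. a k * Q (x k) (\<Sum>j\<in>I. fscale (bb j) (x j)))"
    by (rule bilin_sum_left[OF b sub fin x ys])
  also have "\<dots> = (\<Sum>k\<in>I. a k * (bb k * q k))"
  proof (rule sum.cong[OF refl])
    fix k assume k: "k \<in> I"
    have "Q (x k) (\<Sum>j\<in>I. fscale (bb j) (x j)) = Q (\<Sum>j\<in>I. fscale (bb j) (x j)) (x k)"
      using bilin_sym[OF b x[OF k] ys] .
    also have "\<dots> = (\<Sum>j\<in>I. bb j * Q (x j) (x k))"
      by (rule bilin_sum_left[OF b sub fin x x[OF k]])
    also have "\<dots> = (\<Sum>j\<in>I. if j = k then bb k * q k else 0)"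
    proof (rule sum.cong[OF refl])
      fix j assume j: "j \<in> I"
      have "Q (x j) (x k) = (if j = k then q j else 0)" by (rule d[OF j k])
      then show "bb j * Q (x j) (x k) = (if j = k then bb k * q k else 0)" by auto
    qed
    also have "\<dots> = bb k * q k" using k fin by simp
    finally show "a k * Q (x k) (\<Sum>j\<in>I. fscale (bb j) (x j)) = a k * (bb k * q k)" by simp
  qed
  finally show ?thesis by (simp add: mult.assoc)
qed



declare minus_apply[simp del]

lemma init_seg:
  fixes lam :: "nat \<Rightarrow> ereal"
  assumes mono: "\<forall>j\<in>{1..n}. \<forall>k\<in>{1..n}. j \<le> k \<longrightarrow> lam j \<le> lam k"
  shows "{k\<in>{1..n}. lam k < ereal \<eta>} = {1..n_small n lam \<eta>}" (is "?F = _")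
proof -
  let ?m = "n_small n lam \<eta>"
  have finF: "finite ?F" by simp
  have m: "?m = card ?F" unfolding n_small_def ..
  have sub: "?F \<subseteq> {1..?m}"
  proof
    fix k assume k: "k \<in> ?F"
    have "{1..k} \<subseteq> ?F"
    proof
      fix j assume j: "j \<in> {1..k}"
      then have "lam j \<le> lam k" using mono k by auto
      then show "j \<in> ?F" using k j by auto
    qed
    then have "card {1..k} \<le> card ?F" by (rule card_mono[OF finF])
    then show "k \<in> {1..?m}" using k m by auto
  qed
  have "card ?F = card {1..?m}" using m by simp
  then show ?thesis using card_subset_eq[OF _ sub] by simp
qed

lemma spectral:
  fixes S :: "('a \<Rightarrow> real) set" and A B :: "('a \<Rightarrow> real) \<Rightarrow> ('a \<Rightarrow> real) \<Rightarrow> real"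
    and lam :: "nat \<Rightarrow> ereal" and p :: "nat \<Rightarrow> 'a \<Rightarrow> real"
  assumes sub: "fsubspace S" and bA: "bilin S A" and pA: "psd S A" and bB: "bilin S B"
    and eb: "normalized_eigenbasis S A B n lam p" and eta: "\<eta> > 0" and r: "r \<in> S"
  shows "proj_op B (n_small n lam \<eta>) p r \<in> S"
    "B (r - proj_op B (n_small n lam \<eta>) p r) (r - proj_op B (n_small n lam \<eta>) p r) \<le> A r r / \<eta>"
    "A (r - proj_op B (n_small n lam \<eta>) p r) (r - proj_op B (n_small n lam \<eta>) p r) \<le> A r r"
proof -
  interpret M: module "fscale :: real \<Rightarrow> ('a \<Rightarrow> real) \<Rightarrow> _" by (rule module_fscale)
  define m where "m = n_small n lam \<eta>"
  note E = eb[unfolded normalized_eigenbasis_def]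
  have pS: "\<And>k. k \<in> {1..n} \<Longrightarrow> p k \<in> S" using E unfolding eigenpair_def by blast
  have inj: "inj_on p {1..n}" using E by blast
  have "r \<in> fspan (p ` {1..n})" using E r by blast
  then obtain u where "r = (\<Sum>v\<in>p ` {1..n}. fscale (u v) v)"
    using M.span_finite[of "p ` {1..n}"] by auto
  also have "\<dots> = (\<Sum>k\<in>{1..n}. fscale (u (p k)) (p k))"
    using sum.reindex[OF inj, of "\<lambda>v. fscale (u v) v"] by simp
  finally have rexp: "r = (\<Sum>k\<in>{1..n}. fscale (c k) (p k))" if "c = (\<lambda>k. u (p k))" for c
    using that by simp
  define c where "c = (\<lambda>k. u (p k))"
  have rexp: "r = (\<Sum>k\<in>{1..n}. fscale (c k) (p k))" using rexp c_def by simp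
  define \<beta> where "\<beta> = (\<lambda>k. if lam k = \<infinity> then 0 else (1::real))"
  have ker: "\<And>k v. k \<in> {1..n} \<Longrightarrow> lam k = \<infinity> \<Longrightarrow> v \<in> S \<Longrightarrow> B (p k) v = 0"
    using E unfolding form_ker_def by blast
  have Bd: "B (p k) (p j) = (if k = j then \<beta> k else 0)" if k: "k \<in> {1..n}" and j: "j \<in> {1..n}" for k j
  proof (cases "lam k = \<infinity>")
    case True then show ?thesis using ker[OF k True pS[OF j]] \<beta>_def by auto
  next
    case False note kf = False
    show ?thesis
    proof (cases "lam j = \<infinity>")
      case True
      have "B (p k) (p j) = B (p j) (p k)" by (rule bilin_sym[OF bB pS[OF k] pS[OF j]])
      also have "\<dots> = 0" using ker[OF j True pS[OF k]] .
      finally show ?thesis using kf True by auto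
    next
      case False
      then show ?thesis using E k j kf \<beta>_def by auto
    qed
  qed
  have Ad: "A (p k) (p j) = (if k = j then A (p k) (p k) else 0)" if k: "k \<in> {1..n}" and j: "j \<in> {1..n}" for k j
    using E k j by auto
  have Ann: "\<And>k. k \<in> {1..n} \<Longrightarrow> 0 \<le> A (p k) (p k)" using pA pS unfolding psd_def by blast
  have Aev: "A (p k) (p k) = \<rho>" if k: "k \<in> {1..n}" and lk: "lam k = ereal \<rho>" for k \<rho>
  proof -
    have ep: "eigenpair S A B (lam k) (p k)" using E k by blast
    have "lam k \<noteq> \<infinity>" using lk by simp
    then obtain \<rho>' where l': "lam k = ereal \<rho>'" and ev: "\<forall>v\<in>S. A (p k) v = \<rho>' * B (p k) v"
      using ep unfolding eigenpair_def by blast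
    have "B (p k) (p k) = 1" using Bd[OF k k] lk \<beta>_def by simp
    then show ?thesis using ev pS[OF k] l' lk by simp
  qed
  have F: "{k\<in>{1..n}. lam k < ereal \<eta>} = {1..m}"
    unfolding m_def by (rule init_seg) (use E in blast)
  have mn: "m \<le> n"
  proof -
    have "{1..m} \<subseteq> {1..n}" using F by blast
    then show ?thesis by (cases "m = 0") auto
  qed
  have lt: "\<And>k. k \<in> {1..m} \<Longrightarrow> lam k < ereal \<eta>" using F by blast
  have ge: "\<And>k. k \<in> {1..n} \<Longrightarrow> \<not> k \<le> m \<Longrightarrow> ereal \<eta> \<le> lam k" using F by force
  have Brp: "B r (p j) = c j * \<beta> j" if j: "j \<in> {1..n}" for j
  proof -
    have "B r (p j) = (\<Sum>k\<in>{1..n}. c k * B (p k) (p j))"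
      unfolding rexp by (rule bilin_sum_left[OF bB sub]) (use pS j in auto)
    also have "\<dots> = (\<Sum>k\<in>{1..n}. if k = j then c j * \<beta> j else 0)"
      by (rule sum.cong[OF refl]) (use Bd[OF _ j] in simp)
    also have "\<dots> = c j * \<beta> j" using j by simp
    finally show ?thesis .
  qed
  have Pi: "proj_op B m p r = (\<Sum>k\<in>{1..m}. fscale (c k) (p k))"
    unfolding proj_op_def
  proof (rule sum.cong[OF refl])
    fix k assume k: "k \<in> {1..m}"
    then have kn: "k \<in> {1..n}" using mn by auto
    have "lam k \<noteq> \<infinity>" using lt[OF k] by auto
    then show "fscale (B r (p k)) (p k) = fscale (c k) (p k)" using Brp[OF kn] \<beta>_def by simp
  qed
  show PiS: "proj_op B (n_small n lam \<eta>) p r \<in> S"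
    unfolding m_def[symmetric] Pi by (rule sub_sum[OF sub]) (use pS mn in auto)
  define d where "d = (\<lambda>k. if k \<le> m then 0 else c k)"
  have wexp: "r - proj_op B m p r = (\<Sum>k\<in>{1..n}. fscale (d k) (p k))"
  proof
    fix x
    have "(\<Sum>k\<in>{1..n}. c k * p k x) = (\<Sum>k\<in>{1..n}. (if k \<le> m then c k * p k x else 0) + d k * p k x)"
      by (rule sum.cong[OF refl]) (simp add: d_def)
    also have "\<dots> = (\<Sum>k\<in>{1..n}. (if k \<le> m then c k * p k x else 0)) + (\<Sum>k\<in>{1..n}. d k * p k x)"
      by (rule sum.distrib)
    also have "(\<Sum>k\<in>{1..n}. (if k \<le> m then c k * p k x else 0)) = (\<Sum>k\<in>{k\<in>{1..n}. k \<le> m}. c k * p k x)"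
      by (rule sum.inter_filter[symmetric]) simp
    also have "{k\<in>{1..n}. k \<le> m} = {1..m}" using mn by auto
    finally have eq: "(\<Sum>k\<in>{1..n}. c k * p k x) = (\<Sum>k\<in>{1..m}. c k * p k x) + (\<Sum>k\<in>{1..n}. d k * p k x)" .
    show "(r - proj_op B m p r) x = (\<Sum>k\<in>{1..n}. fscale (d k) (p k)) x"
      unfolding minus_apply Pi sum_fun_apply fscale_apply
      apply (subst rexp)
      unfolding sum_fun_apply fscale_apply using eq by linarith
  qed
  have pS': "\<And>k. k \<in> {1..n} \<Longrightarrow> p k \<in> S" by (rule pS)
  have Aw: "A (r - proj_op B m p r) (r - proj_op B m p r) = (\<Sum>k\<in>{1..n}. d k * d k * A (p k) (p k))"
    unfolding wexp by (rule diag_quad[where Q=A and x=p and q="\<lambda>k. A (p k) (p k)" and I="{1..n}", OF bA sub finite_atLeastAtMost pS' Ad])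
  have Ar: "A r r = (\<Sum>k\<in>{1..n}. c k * c k * A (p k) (p k))"
  proof -
    have "A (\<Sum>k\<in>{1..n}. fscale (c k) (p k)) (\<Sum>k\<in>{1..n}. fscale (c k) (p k)) = (\<Sum>k\<in>{1..n}. c k * c k * A (p k) (p k))"
      by (rule diag_quad[where Q=A and x=p and q="\<lambda>k. A (p k) (p k)" and I="{1..n}", OF bA sub finite_atLeastAtMost pS' Ad])
    then show ?thesis unfolding rexp[symmetric] .
  qed
  have Bw: "B (r - proj_op B m p r) (r - proj_op B m p r) = (\<Sum>k\<in>{1..n}. d k * d k * \<beta> k)"
    unfolding wexp by (rule diag_quad[where Q=B and x=p and q="\<beta>" and I="{1..n}", OF bB sub finite_atLeastAtMost pS' Bd])
  have dc: "\<And>k. k \<in> {1..n} \<Longrightarrow> d k * d k * A (p k) (p k) \<le> c k * c k * A (p k) (p k)"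
  proof -
    fix k assume k: "k \<in> {1..n}"
    show "d k * d k * A (p k) (p k) \<le> c k * c k * A (p k) (p k)"
    proof (cases "k \<le> m")
      case True
      have "0 \<le> c k * c k * A (p k) (p k)" using Ann[OF k] by simp
      then show ?thesis using True by (simp add: d_def)
    next
      case False then show ?thesis by (simp add: d_def)
    qed
  qed
  have AwAr: "A (r - proj_op B m p r) (r - proj_op B m p r) \<le> A r r"
    unfolding Aw Ar by (rule sum_mono) (rule dc)
  then show "A (r - proj_op B (n_small n lam \<eta>) p r) (r - proj_op B (n_small n lam \<eta>) p r) \<le> A r r"
    unfolding m_def .
  have tm: "d k * d k * \<beta> k \<le> d k * d k * A (p k) (p k) / \<eta>" if k: "k \<in> {1..n}" for k
  proof (cases "k \<le> m")
    case True then show ?thesis by (simp add: d_def)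
  next
    case False
    show ?thesis
    proof (cases "lam k = \<infinity>")
      case True
      then show ?thesis using Ann[OF k] eta by (simp add: \<beta>_def)
    next
      case fin: False
      have "\<bar>lam k\<bar> \<noteq> \<infinity>" using fin ge[OF k False] by auto
      then obtain \<rho> where lk: "lam k = ereal \<rho>" by (cases "lam k") auto
      have "\<eta> \<le> \<rho>" using ge[OF k False] lk by simp
      have a: "A (p k) (p k) = \<rho>" by (rule Aev[OF k lk])
      have "d k * d k * 1 \<le> d k * d k * (\<rho> / \<eta>)"
        using \<open>\<eta> \<le> \<rho>\<close> eta by (intro mult_left_mono) auto
      then show ?thesis using fin a by (simp add: \<beta>_def)
    qed
  qed
  have "B (r - proj_op B m p r) (r - proj_op B m p r) \<le> (\<Sum>k\<in>{1..n}. d k * d k * A (p k) (p k) / \<eta>)"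
    unfolding Bw by (rule sum_mono) (rule tm)
  also have "\<dots> = A (r - proj_op B m p r) (r - proj_op B m p r) / \<eta>"
    unfolding Aw by (simp add: sum_divide_distrib)
  also have "\<dots> \<le> A r r / \<eta>" using AwAr eta by (simp add: divide_right_mono)
  finally show "B (r - proj_op B (n_small n lam \<eta>) p r) (r - proj_op B (n_small n lam \<eta>) p r) \<le> A r r / \<eta>"
    unfolding m_def .
qed



lemma a_sum_bilin:
  assumes "finite Ts" "\<forall>\<tau>\<in>Ts. good K \<tau> S"
  shows "bilin S (a_sum K Ts)"
  unfolding bilin_def a_sum_def
proof (intro conjI ballI allI)
  fix u v w assume "u \<in> S" "v \<in> S" "w \<in> S"
  then show "(\<Sum>\<tau>\<in>Ts. a_elem K \<tau> (u + v) w) = (\<Sum>\<tau>\<in>Ts. a_elem K \<tau> u w) + (\<Sum>\<tau>\<in>Ts. a_elem K \<tau> v w)"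
  proof -
    have "(\<Sum>\<tau>\<in>Ts. a_elem K \<tau> (u + v) w) = (\<Sum>\<tau>\<in>Ts. a_elem K \<tau> u w + a_elem K \<tau> v w)"
      by (rule sum.cong[OF refl]) (use assms \<open>u \<in> S\<close> \<open>v \<in> S\<close> \<open>w \<in> S\<close> a_elem_add in blast)
    then show ?thesis by (simp add: sum.distrib)
  qed
next
  fix c u w assume "u \<in> S" "w \<in> S"
  then show "(\<Sum>\<tau>\<in>Ts. a_elem K \<tau> (fscale c u) w) = c * (\<Sum>\<tau>\<in>Ts. a_elem K \<tau> u w)"
  proof -
    have "(\<Sum>\<tau>\<in>Ts. a_elem K \<tau> (fscale c u) w) = (\<Sum>\<tau>\<in>Ts. c * a_elem K \<tau> u w)"
      by (rule sum.cong[OF refl]) (use assms \<open>u \<in> S\<close> a_elem_scale in blast)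
    then show ?thesis by (simp add: sum_distrib_left)
  qed
next
  fix u v assume "u \<in> S" "v \<in> S"
  show "(\<Sum>\<tau>\<in>Ts. a_elem K \<tau> u v) = (\<Sum>\<tau>\<in>Ts. a_elem K \<tau> v u)"
    by (rule sum.cong[OF refl]) (use assms a_elem_sym in blast)
qed

lemma a_sum_psd:
  assumes "\<forall>\<tau>\<in>Ts. good K \<tau> S"
  shows "psd S (a_sum K Ts)"
  unfolding psd_def a_sum_def
proof
  fix u assume "u \<in> S"
  then show "0 \<le> (\<Sum>\<tau>\<in>Ts. a_elem K \<tau> u u)"
    by (intro sum_nonneg) (use assms a_elem_nonneg in blast)
qed

lemma bilin_comp:
  assumes b: "bilin S Q" and LS: "\<forall>u\<in>S. L u \<in> S" and lin: "linear_on_set S L"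
  shows "bilin S (\<lambda>u v. Q (L u) (L v))"
  unfolding bilin_def
proof (intro conjI ballI allI)
  fix u v w assume u: "u \<in> S" and v: "v \<in> S" and w: "w \<in> S"
  have "L (u + v) = L u + L v" using lin u v unfolding linear_on_set_def by blast
  then show "Q (L (u + v)) (L w) = Q (L u) (L w) + Q (L v) (L w)"
    using bilin_add[OF b] LS u v w by simp
next
  fix c u w assume u: "u \<in> S" and w: "w \<in> S"
  have "L (fscale c u) = fscale c (L u)" using lin u unfolding linear_on_set_def by blast
  then show "Q (L (fscale c u)) (L w) = c * Q (L u) (L w)"
    using bilin_scale[OF b] LS u w by simp
next
  fix u v assume "u \<in> S" "v \<in> S"
  then show "Q (L u) (L v) = Q (L v) (L u)" using bilin_sym[OF b] LS by simp
qed

lemma lin_minus: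
  assumes sub: "fsubspace S" and LS: "\<forall>u\<in>S. L u \<in> S" and lin: "linear_on_set S L"
  shows "\<forall>u\<in>S. u - L u \<in> S" "linear_on_set S (\<lambda>u. u - L u)"
proof -
  show "\<forall>u\<in>S. u - L u \<in> S" using sub_diff[OF sub] LS by blast
  show "linear_on_set S (\<lambda>u. u - L u)"
    unfolding linear_on_set_def
  proof (intro conjI ballI allI)
    fix u w assume "u \<in> S" "w \<in> S"
    then have "L (u + w) = L u + L w" using lin unfolding linear_on_set_def by blast
    then show "u + w - L (u + w) = u - L u + (w - L w)" by (simp add: algebra_simps)
  next
    fix c u assume "u \<in> S"
    then have "L (fscale c u) = fscale c (L u)" using lin unfolding linear_on_set_def by blast
    then show "fscale c u - L (fscale c u) = fscale c (u - L u)"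
      by (simp add: fun_eq_iff fscale_apply minus_apply algebra_simps)
  qed
qed

lemma quad_add:
  assumes b: "bilin S A" and x: "x \<in> S" and y: "y \<in> S" and sub: "fsubspace S"
  shows "A (x + y) (x + y) = A x x + 2 * A x y + A y y"
proof -
  have xy: "x + y \<in> S" by (rule sub_add[OF sub x y])
  have 1: "A (x + y) (x + y) = A x (x + y) + A y (x + y)" by (rule bilin_add[OF b x y xy])
  have 2: "A x (x + y) = A x x + A y x"
    using bilin_sym[OF b x xy] bilin_add[OF b x y x] by simp
  have 3: "A y (x + y) = A x y + A y y"
    using bilin_sym[OF b y xy] bilin_add[OF b x y y] by simp
  have 4: "A y x = A x y" by (rule bilin_sym[OF b y x])
  show ?thesis using 1 2 3 4 by linarith
qed

lemma par_ineq:
  assumes b: "bilin S A" and p: "psd S A" and x: "x \<in> S" and y: "y \<in> S" and sub: "fsubspace S"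
  shows "A (x - y) (x - y) \<le> 2 * A x x + 2 * A y y"
proof -
  define y' where "y' = fscale (-1) y"
  have y': "y' \<in> S" unfolding y'_def by (rule sub_scale[OF sub y])
  have e: "x - y = x + y'" unfolding y'_def by (rule fminus_eq)
  have 1: "A (x + y') (x + y') = A x x + 2 * A x y' + A y' y'" by (rule quad_add[OF b x y' sub])
  have 2: "A x y' = - A x y"
    using bilin_sym[OF b x y'] bilin_scale[OF b y x, of "-1"] bilin_sym[OF b x y] unfolding y'_def by simp
  have 3: "A y' y' = A y y"
    using bilin_scale[OF b y y', of "-1"] bilin_sym[OF b y y'] bilin_scale[OF b y y, of "-1"]
    unfolding y'_def by simp
  have 4: "0 \<le> A (x + y) (x + y)" using p sub_add[OF sub x y] unfolding psd_def by blast
  have 5: "A (x + y) (x + y) = A x x + 2 * A x y + A y y" by (rule quad_add[OF b x y sub])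
  show ?thesis unfolding e using 1 2 3 4 5 by linarith
qed

lemma a_elem_cong:
  assumes "open \<tau>" "\<And>x. x \<in> \<tau> \<Longrightarrow> f x = f' x" "\<And>x. x \<in> \<tau> \<Longrightarrow> g x = g' x"
  shows "a_elem K \<tau> f g = a_elem K \<tau> f' g'"
  unfolding a_elem_def
  by (rule integral_cong) (simp add: grad_local[OF assms(1) _ assms(2)] grad_local[OF assms(1) _ assms(3)])

lemma grad_zero: "grad (\<lambda>_. 0::real) x = (0 :: real^'d)"
  by (rule grad_unique) simp

lemma a_elem_zero:
  assumes "open \<tau>" "\<And>x. x \<in> \<tau> \<Longrightarrow> f x = 0"
  shows "a_elem K \<tau> f f = 0"
proof -
  have "a_elem K \<tau> f f = a_elem K \<tau> (\<lambda>_. 0) (\<lambda>_. 0)" by (rule a_elem_cong) (use assms in auto)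
  also have "\<dots> = 0" unfolding a_elem_def grad_zero by simp
  finally show ?thesis .
qed

lemma mesh_facts:
  assumes "conforming_mesh Th \<Omega>"
  shows "finite Th" "\<And>\<tau>. \<tau> \<in> Th \<Longrightarrow> open \<tau>" "\<And>\<tau>. \<tau> \<in> Th \<Longrightarrow> \<tau> = interior (closure \<tau>)"
    "\<And>\<tau> \<sigma>. \<tau> \<in> Th \<Longrightarrow> \<sigma> \<in> Th \<Longrightarrow> \<tau> \<noteq> \<sigma> \<Longrightarrow> \<tau> \<inter> \<sigma> = {}"
    "\<Omega> = subdom Th"
  using assms unfolding conforming_mesh_def subdom_def by auto

lemma mesh_elem_sub:
  assumes mesh: "conforming_mesh Th \<Omega>" and Ts: "Ts \<subseteq> Th" and t: "\<tau> \<in> Ts"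
  shows "\<tau> \<subseteq> subdom Ts"
proof -
  have "\<tau> = interior (closure \<tau>)" using mesh_facts(3)[OF mesh] Ts t by blast
  also have "\<dots> \<subseteq> interior (\<Union>\<tau>\<in>Ts. closure \<tau>)" by (rule interior_mono) (use t in blast)
  finally show ?thesis unfolding subdom_def .
qed

lemma mesh_elem_disj:
  assumes mesh: "conforming_mesh Th \<Omega>" and Ts: "Ts \<subseteq> Th" and t: "\<tau> \<in> Th" "\<tau> \<notin> Ts"
  shows "\<tau> \<inter> subdom Ts = {}"
proof -
  have "\<tau> \<inter> closure \<sigma> = {}" if s: "\<sigma> \<in> Ts" for \<sigma>
  proof -
    have "\<tau> \<noteq> \<sigma>" using s t by blast
    then have "\<tau> \<inter> \<sigma> = {}" using mesh_facts(4)[OF mesh] Ts s t by blast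
    moreover have "open \<tau>" using mesh_facts(2)[OF mesh] t by blast
    ultimately show ?thesis using open_Int_closure_eq_empty by blast
  qed
  moreover have "subdom Ts \<subseteq> (\<Union>\<sigma>\<in>Ts. closure \<sigma>)" unfolding subdom_def by (rule interior_subset)
  ultimately show ?thesis by blast
qed

lemma good_loc:
  assumes mesh: "conforming_mesh Th \<Omega>" and coeff: "admissible_coeff K \<Omega>"
    and Vh: "fe_space Th \<Omega> \<Gamma>D K Vh" and VlVh: "Vl \<subseteq> Vh"
    and Ts: "Ts \<subseteq> Th" and t: "\<tau> \<in> Ts"
  shows "good K \<tau> (loc_space Vl (subdom Ts))"
proof -
  have tTh: "\<tau> \<in> Th" using Ts t by blast
  have op: "open \<tau>" using mesh_facts(2)[OF mesh] tTh by blast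
  have tU: "\<tau> \<subseteq> subdom Ts" by (rule mesh_elem_sub[OF mesh Ts t])
  have tO: "\<tau> \<subseteq> \<Omega>"
  proof -
    have "\<tau> \<subseteq> subdom Th" by (rule mesh_elem_sub[OF mesh order_refl tTh])
    then show ?thesis using mesh_facts(5)[OF mesh] by simp
  qed
  obtain c where c: "c > 0" "\<forall>x\<in>\<Omega>. \<forall>\<xi>. c * (norm \<xi>)\<^sup>2 \<le> \<xi> \<bullet> (K x *v \<xi>)"
    using coeff unfolding admissible_coeff_def by blast
  have pos: "\<forall>x\<in>\<tau>. \<forall>\<xi>. 0 \<le> \<xi> \<bullet> (K x *v \<xi>)"
  proof (intro ballI allI)
    fix x \<xi> assume "x \<in> \<tau>"
    then have "c * (norm \<xi>)\<^sup>2 \<le> \<xi> \<bullet> (K x *v \<xi>)" using c tO by blast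
    moreover have "0 \<le> c * (norm \<xi>)\<^sup>2" using c by simp
    ultimately show "0 \<le> \<xi> \<bullet> (K x *v \<xi>)" by linarith
  qed
  have sym: "\<forall>x\<in>\<tau>. transpose (K x) = K x" using coeff tO unfolding admissible_coeff_def by blast
  have rep: "\<And>f. f \<in> loc_space Vl (subdom Ts) \<Longrightarrow> \<exists>v\<in>Vh. \<forall>x\<in>\<tau>. f x = v x"
  proof -
    fix f assume "f \<in> loc_space Vl (subdom Ts)"
    then obtain v where v: "v \<in> Vl" "f = restr (subdom Ts) v" unfolding loc_space_def by blast
    then show "\<exists>v\<in>Vh. \<forall>x\<in>\<tau>. f x = v x" using VlVh tU unfolding restr_def by (intro bexI[of _ v]) auto
  qed
  have VhD: "\<forall>v\<in>Vh. \<forall>x\<in>\<tau>. v differentiable (at x)" using Vh tTh unfolding fe_space_def by blast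
  have VhI: "\<forall>u\<in>Vh. \<forall>v\<in>Vh. (\<lambda>x. (K x *v grad u x) \<bullet> grad v x) integrable_on \<tau>"
    using Vh tTh unfolding fe_space_def by blast
  have diff: "\<forall>f\<in>loc_space Vl (subdom Ts). \<forall>x\<in>\<tau>. f differentiable (at x)"
  proof (intro ballI)
    fix f x assume f: "f \<in> loc_space Vl (subdom Ts)" and x: "x \<in> \<tau>"
    obtain v where v: "v \<in> Vh" "\<forall>x\<in>\<tau>. f x = v x" using rep[OF f] by blast
    show "f differentiable (at x)"
      by (rule diff_local[OF op x, of v]) (use v VhD x in auto)
  qed
  have int: "\<forall>f\<in>loc_space Vl (subdom Ts). \<forall>g\<in>loc_space Vl (subdom Ts).
      (\<lambda>x. (K x *v grad f x) \<bullet> grad g x) integrable_on \<tau>"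
  proof (intro ballI)
    fix f g assume f: "f \<in> loc_space Vl (subdom Ts)" and g: "g \<in> loc_space Vl (subdom Ts)"
    obtain v where v: "v \<in> Vh" "\<forall>x\<in>\<tau>. f x = v x" using rep[OF f] by blast
    obtain w where w: "w \<in> Vh" "\<forall>x\<in>\<tau>. g x = w x" using rep[OF g] by blast
    have "(\<lambda>x. (K x *v grad v x) \<bullet> grad w x) integrable_on \<tau>" using VhI v w by blast
    then show "(\<lambda>x. (K x *v grad f x) \<bullet> grad g x) integrable_on \<tau>"
      by (rule integrable_eq) (simp add: grad_local[OF op _ v(2)[rule_format]] grad_local[OF op _ w(2)[rule_format]])
  qed
  show ?thesis unfolding good_def using op sym pos diff int by blast
qed

lemma loc_space_sub:
  assumes "fsubspace V" shows "fsubspace (loc_space V U)"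
proof -
  interpret M: module "fscale :: real \<Rightarrow> ('a \<Rightarrow> real) \<Rightarrow> _" by (rule module_fscale)
  show ?thesis
  proof (rule M.subspaceI)
    have "restr U 0 = 0" by (simp add: restr_def fun_eq_iff zero_fun_apply)
    then show "0 \<in> loc_space V U" using sub_zero[OF assms] unfolding loc_space_def by (intro image_eqI[of _ _ 0]) auto
  next
    fix x y assume "x \<in> loc_space V U" "y \<in> loc_space V U"
    then obtain v w where "v \<in> V" "w \<in> V" "x = restr U v" "y = restr U w" unfolding loc_space_def by blast
    moreover have "restr U v + restr U w = restr U (v + w)" by (simp add: restr_def fun_eq_iff plus_fun_apply)
    ultimately show "x + y \<in> loc_space V U" using sub_add[OF assms] unfolding loc_space_def by auto
  next
    fix c x assume "x \<in> loc_space V U"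
    then obtain v where "v \<in> V" "x = restr U v" unfolding loc_space_def by blast
    moreover have "fscale c (restr U v) = restr U (fscale c v)" by (simp add: restr_def fun_eq_iff fscale_apply)
    ultimately show "fscale c x \<in> loc_space V U" using sub_scale[OF assms] unfolding loc_space_def by auto
  qed
qed


lemma lin_sum:
  assumes sub: "fsubspace S" and LS: "\<forall>u\<in>S. L u \<in> S" and lin: "linear_on_set S L"
    and fin: "finite I" and x: "\<And>k. k \<in> I \<Longrightarrow> x k \<in> S"
  shows "L (\<Sum>k\<in>I. fscale (a k) (x k)) = (\<Sum>k\<in>I. fscale (a k) (L (x k)))"
  using fin x
proof (induction I rule: finite_induct)
  case empty
  have "L (fscale 0 0) = fscale 0 (L 0)" using lin sub_zero[OF sub] unfolding linear_on_set_def by blast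
  moreover have "\<And>f. fscale 0 f = (0::'a \<Rightarrow> real)" by (simp add: fun_eq_iff fscale_apply zero_fun_apply)
  ultimately have "L 0 = 0" by metis
  then show ?case by (simp only: sum.empty)
next
  case (insert k I)
  have xs: "(\<Sum>k\<in>I. fscale (a k) (x k)) \<in> S" by (rule sub_sum[OF sub]) (use insert in auto)
  have xk: "x k \<in> S" using insert by auto
  have "L (\<Sum>k\<in>insert k I. fscale (a k) (x k)) = L (fscale (a k) (x k) + (\<Sum>k\<in>I. fscale (a k) (x k)))"
    by (subst sum.insert[OF insert.hyps(1,2)]) (rule refl)
  also have "\<dots> = L (fscale (a k) (x k)) + L (\<Sum>k\<in>I. fscale (a k) (x k))"
    using lin sub_scale[OF sub xk] xs unfolding linear_on_set_def by blast
  also have "L (fscale (a k) (x k)) = fscale (a k) (L (x k))"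
    using lin xk unfolding linear_on_set_def by blast
  also have "L (\<Sum>k\<in>I. fscale (a k) (x k)) = (\<Sum>k\<in>I. fscale (a k) (L (x k)))"
    using insert.prems by (intro insert.IH) auto
  also have "fscale (a k) (L (x k)) + (\<Sum>k\<in>I. fscale (a k) (L (x k))) = (\<Sum>k\<in>insert k I. fscale (a k) (L (x k)))"
    by (rule sum.insert[OF insert.hyps(1,2), symmetric])
  finally show ?case .
qed

lemma ext0_sum: "ext0 U (\<Sum>k\<in>I. fscale (a k) (f k)) = (\<Sum>k\<in>I. fscale (a k) (ext0 U (f k)))"
  by (auto simp: fun_eq_iff ext0_def sum_fun_apply fscale_apply)

lemma ext0_add: "ext0 U f + ext0 U g = ext0 U (f + g)"
  by (auto simp: fun_eq_iff ext0_def plus_fun_apply)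

theorem lemma3p18:
  fixes Th :: "(real^'d) set set" and \<Omega> \<Gamma>D :: "(real^'d) set"
    and K :: "real^'d \<Rightarrow> real^'d^'d"
    and Vh Vl Vlm1 :: "(real^'d \<Rightarrow> real) set"
    and P :: nat and T :: "nat \<Rightarrow> (real^'d) set set"
    and chi :: "nat \<Rightarrow> (real^'d \<Rightarrow> real) \<Rightarrow> (real^'d \<Rightarrow> real)"
    and \<eta> :: real and \<alpha> :: nat
    and n :: "nat \<Rightarrow> nat" and lam :: "nat \<Rightarrow> nat \<Rightarrow> ereal"
    and p :: "nat \<Rightarrow> nat \<Rightarrow> (real^'d \<Rightarrow> real)"
    and vl :: "real^'d \<Rightarrow> real"
  assumes dim: "CARD('d) \<in> {2, 3}"
    and mesh: "conforming_mesh Th \<Omega>"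
    and GammaD: "\<Gamma>D \<subseteq> frontier \<Omega>"
    and coeff: "admissible_coeff K \<Omega>"
    and Vh: "fe_space Th \<Omega> \<Gamma>D K Vh"
    and ah_pd: "\<forall>v\<in>Vh. v \<noteq> 0 \<longrightarrow> a_sum K Th v v > 0"
    and Vl: "fsubspace Vl" "Vl \<subseteq> Vh"
    and Vlm1: "fsubspace Vlm1" "Vlm1 \<subseteq> Vl"
    and cover: "P \<ge> 1" "\<forall>i\<in>{1..P}. T i \<subseteq> Th" "(\<Union>i\<in>{1..P}. T i) = Th"
    and chi_lin: "\<forall>i\<in>{1..P}. (\<forall>w\<in>loc_space Vl (subdom (T i)). chi i w \<in> loc_space Vl (subdom (T i)))
                     \<and> linear_on_set (loc_space Vl (subdom (T i))) (chi i)"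
    and chi_supp: "\<forall>i\<in>{1..P}. \<forall>w\<in>loc_space Vl (subdom (T i)).
                     ext0 (subdom (T i)) (chi i w) \<in> supp_space Vl (subdom (T i))"
    and chi_pu: "\<forall>v\<in>Vl. (\<Sum>i\<in>{1..P}. ext0 (subdom (T i)) (chi i (restr (subdom (T i)) v))) = v"
    and chi_id: "\<forall>i\<in>{1..P}. \<forall>w\<in>loc_space Vl (subdom (T i)).
                   \<forall>\<tau>\<in>T i - overlap_elems T P i. \<forall>x\<in>\<tau>. chi i w x = w x"
    and eta: "\<eta> > 0"
    and alpha: "\<alpha> \<in> {1, 2, 3}"
    and kernels: "\<forall>i\<in>{1..P}. form_ker (loc_space Vl (subdom (T i))) (a_sum K (T i))
                     \<inter> form_ker (loc_space Vl (subdom (T i))) (b_form \<alpha> K T P i (chi i)) = {0}"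
    and eig: "\<forall>i\<in>{1..P}. normalized_eigenbasis (loc_space Vl (subdom (T i))) (a_sum K (T i))
                     (b_form \<alpha> K T P i (chi i)) (n i) (lam i) (p i)"
    and coarse: "fspan {ext0 (subdom (T i)) (chi i (p i k)) | i k.
                     i \<in> {1..P} \<and> k \<in> {1..n_small (n i) (lam i) \<eta>}} \<subseteq> Vlm1"
    and vl: "vl \<in> Vl"
  shows "let r = (\<lambda>i. restr (subdom (T i)) vl);
             Pi = (\<lambda>i. proj_op (b_form \<alpha> K T P i (chi i)) (n_small (n i) (lam i) \<eta>) (p i));
             vli = (\<lambda>i. ext0 (subdom (T i)) (chi i (r i - Pi i (r i))));
             vlm1 = (\<Sum>i\<in>{1..P}. ext0 (subdom (T i)) (chi i (Pi i (r i))))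
         in vl = vlm1 + (\<Sum>i\<in>{1..P}. vli i) \<and> vlm1 \<in> Vlm1 \<and>
            (\<forall>i\<in>{1..P}. vli i \<in> supp_space Vl (subdom (T i))) \<and>
            (\<forall>i\<in>{1..P}. a_sum K Th (vli i) (vli i) \<le> C1 \<alpha> \<eta> * a_sum K (T i) (r i) (r i))"
proof -
  interpret M: module "fscale :: real \<Rightarrow> (real^'d \<Rightarrow> real) \<Rightarrow> _" by (rule module_fscale)
  define U where "U i = subdom (T i)" for i
  define S where "S i = loc_space Vl (U i)" for i
  define r where "r i = restr (U i) vl" for i
  define B where "B i = b_form \<alpha> K T P i (chi i)" for i
  define m where "m i = n_small (n i) (lam i) \<eta>" for i
  define Pi where "Pi i = proj_op (B i) (m i) (p i)" for i
  define w where "w i = r i - Pi i (r i)" for i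
  define vli where "vli i = ext0 (U i) (chi i (w i))" for i
  define vlm1 where "vlm1 = (\<Sum>i\<in>{1..P}. ext0 (U i) (chi i (Pi i (r i))))"
  have finTh: "finite Th" by (rule mesh_facts(1)[OF mesh])
  have Ti: "\<And>i. i \<in> {1..P} \<Longrightarrow> T i \<subseteq> Th" using cover by blast
  have finT: "\<And>i. i \<in> {1..P} \<Longrightarrow> finite (T i)" using Ti finTh finite_subset by blast
  have subS: "\<And>i. fsubspace (S i)" unfolding S_def by (rule loc_space_sub[OF Vl(1)])
  have rS: "\<And>i. r i \<in> S i" unfolding r_def S_def loc_space_def using vl by blast
  have chiS: "\<And>i. i \<in> {1..P} \<Longrightarrow> \<forall>u\<in>S i. chi i u \<in> S i" using chi_lin unfolding S_def U_def by blast
  have chil: "\<And>i. i \<in> {1..P} \<Longrightarrow> linear_on_set (S i) (chi i)" using chi_lin unfolding S_def U_def by blast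
  have goodT: "\<And>i \<tau>. i \<in> {1..P} \<Longrightarrow> \<tau> \<in> T i \<Longrightarrow> good K \<tau> (S i)"
    unfolding S_def U_def by (rule good_loc[OF mesh coeff Vh Vl(2)]) (use Ti in auto)
  have ovT: "\<And>i. overlap_elems T P i \<subseteq> T i" unfolding overlap_elems_def by blast
  have bsub: "\<And>i Ts. i \<in> {1..P} \<Longrightarrow> Ts \<subseteq> T i \<Longrightarrow> bilin (S i) (a_sum K Ts)"
    by (rule a_sum_bilin) (use finT goodT finite_subset in blast)+
  have psub: "\<And>i Ts. i \<in> {1..P} \<Longrightarrow> Ts \<subseteq> T i \<Longrightarrow> psd (S i) (a_sum K Ts)"
    by (rule a_sum_psd) (use goodT in blast)
  have bA: "\<And>i. i \<in> {1..P} \<Longrightarrow> bilin (S i) (a_sum K (T i))" using bsub by blast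
  have pA: "\<And>i. i \<in> {1..P} \<Longrightarrow> psd (S i) (a_sum K (T i))" using psub by blast
  have Bdef: "B i u v = (if \<alpha> = 1 then a_sum K (T i) (chi i u) (chi i v)
      else if \<alpha> = 2 then a_sum K (overlap_elems T P i) (chi i u) (chi i v)
      else a_sum K (T i) (u - chi i u) (v - chi i v))" for i u v
    unfolding B_def b_form_def ..
  have bB: "bilin (S i) (B i)" if i: "i \<in> {1..P}" for i
  proof -
    consider "\<alpha> = 1" | "\<alpha> = 2" | "\<alpha> = 3" using alpha by blast
    then show ?thesis
    proof cases
      case 1
      then have "B i = (\<lambda>u v. a_sum K (T i) (chi i u) (chi i v))" by (simp add: fun_eq_iff Bdef)
      then show ?thesis using bilin_comp[OF bA[OF i] chiS[OF i] chil[OF i]] by simp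
    next
      case 2
      then have "B i = (\<lambda>u v. a_sum K (overlap_elems T P i) (chi i u) (chi i v))" by (simp add: fun_eq_iff Bdef)
      then show ?thesis using bilin_comp[OF bsub[OF i ovT] chiS[OF i] chil[OF i]] by simp
    next
      case 3
      then have "B i = (\<lambda>u v. a_sum K (T i) ((\<lambda>u. u - chi i u) u) ((\<lambda>u. u - chi i u) v))" by (simp add: fun_eq_iff Bdef)
      then show ?thesis using bilin_comp[OF bA[OF i] lin_minus[OF subS chiS[OF i] chil[OF i]]] by simp
    qed
  qed
  have eigi: "\<And>i. i \<in> {1..P} \<Longrightarrow> normalized_eigenbasis (S i) (a_sum K (T i)) (B i) (n i) (lam i) (p i)"
    using eig unfolding S_def U_def B_def by blast
  have PiS: "\<And>i. i \<in> {1..P} \<Longrightarrow> Pi i (r i) \<in> S i"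
    unfolding Pi_def m_def by (rule spectral(1)[OF subS bA pA bB eigi eta rS])
  have Bw: "\<And>i. i \<in> {1..P} \<Longrightarrow> B i (w i) (w i) \<le> a_sum K (T i) (r i) (r i) / \<eta>"
    unfolding w_def Pi_def m_def by (rule spectral(2)[OF subS bA pA bB eigi eta rS])
  have Aw: "\<And>i. i \<in> {1..P} \<Longrightarrow> a_sum K (T i) (w i) (w i) \<le> a_sum K (T i) (r i) (r i)"
    unfolding w_def Pi_def m_def by (rule spectral(3)[OF subS bA pA bB eigi eta rS])
  have wS: "\<And>i. i \<in> {1..P} \<Longrightarrow> w i \<in> S i" unfolding w_def by (rule sub_diff[OF subS rS PiS])
  have dec: "vl = vlm1 + (\<Sum>i\<in>{1..P}. vli i)"
  proof -
    have "vlm1 + (\<Sum>i\<in>{1..P}. vli i) = (\<Sum>i\<in>{1..P}. ext0 (U i) (chi i (Pi i (r i))) + vli i)"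
      unfolding vlm1_def by (simp add: sum.distrib)
    also have "\<dots> = (\<Sum>i\<in>{1..P}. ext0 (U i) (chi i (r i)))"
    proof (rule sum.cong[OF refl])
      fix i assume i: "i \<in> {1..P}"
      have "ext0 (U i) (chi i (Pi i (r i))) + vli i = ext0 (U i) (chi i (Pi i (r i)) + chi i (w i))"
        unfolding vli_def by (rule ext0_add)
      also have "chi i (Pi i (r i)) + chi i (w i) = chi i (Pi i (r i) + w i)"
        using chil[OF i] PiS[OF i] wS[OF i] unfolding linear_on_set_def by metis
      also have "Pi i (r i) + w i = r i" unfolding w_def by simp
      finally show "ext0 (U i) (chi i (Pi i (r i))) + vli i = ext0 (U i) (chi i (r i))" .
    qed
    also have "\<dots> = vl" using chi_pu vl unfolding U_def r_def by blast
    finally show ?thesis by simp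
  qed
  have coarse_mem: "vlm1 \<in> Vlm1"
  proof -
    let ?G = "{ext0 (subdom (T i)) (chi i (p i k)) | i k. i \<in> {1..P} \<and> k \<in> {1..n_small (n i) (lam i) \<eta>}}"
    have "ext0 (U i) (chi i (Pi i (r i))) \<in> fspan ?G" if i: "i \<in> {1..P}" for i
    proof -
      have E: "\<forall>k\<in>{1..n i}. eigenpair (S i) (a_sum K (T i)) (B i) (lam i k) (p i k)"
        using eigi[OF i] unfolding normalized_eigenbasis_def by blast
      have mn: "m i \<le> n i"
      proof -
        have "m i \<le> card {1..n i}" unfolding m_def n_small_def by (rule card_mono) auto
        then show ?thesis by simp
      qed
      have pS: "\<And>k. k \<in> {1..m i} \<Longrightarrow> p i k \<in> S i" using E mn unfolding eigenpair_def by auto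
      have "chi i (Pi i (r i)) = (\<Sum>k\<in>{1..m i}. fscale (B i (r i) (p i k)) (chi i (p i k)))"
        unfolding Pi_def proj_op_def by (rule lin_sum[OF subS chiS[OF i] chil[OF i] finite_atLeastAtMost pS])
      then have "ext0 (U i) (chi i (Pi i (r i))) = (\<Sum>k\<in>{1..m i}. fscale (B i (r i) (p i k)) (ext0 (U i) (chi i (p i k))))"
        by (simp add: ext0_sum)
      also have "\<dots> \<in> fspan ?G"
      proof (rule M.span_sum)
        fix k assume k: "k \<in> {1..m i}"
        have "ext0 (U i) (chi i (p i k)) \<in> ?G" using i k unfolding U_def m_def by blast
        then show "fscale (B i (r i) (p i k)) (ext0 (U i) (chi i (p i k))) \<in> fspan ?G"
          by (intro M.span_scale M.span_base)
      qed
      finally show ?thesis .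
    qed
    then have "vlm1 \<in> fspan ?G" unfolding vlm1_def by (intro M.span_sum)
    then show ?thesis using coarse by blast
  qed
  have supp: "\<forall>i\<in>{1..P}. vli i \<in> supp_space Vl (subdom (T i))"
    using chi_supp wS unfolding vli_def S_def U_def by blast
  have energy: "a_sum K Th (vli i) (vli i) \<le> C1 \<alpha> \<eta> * a_sum K (T i) (r i) (r i)" if i: "i \<in> {1..P}" for i
  proof -
    let ?A = "a_sum K (T i)"
    let ?f = "chi i (w i)"
    have fS: "?f \<in> S i" using chiS[OF i] wS[OF i] by blast
    have ThA: "a_sum K Th (vli i) (vli i) = ?A ?f ?f"
    proof -
      have "a_sum K Th (vli i) (vli i) = (\<Sum>\<tau>\<in>Th - T i. a_elem K \<tau> (vli i) (vli i)) + (\<Sum>\<tau>\<in>T i. a_elem K \<tau> (vli i) (vli i))"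
        unfolding a_sum_def by (rule sum.subset_diff[OF Ti[OF i] finTh])
      also have "(\<Sum>\<tau>\<in>Th - T i. a_elem K \<tau> (vli i) (vli i)) = 0"
      proof (rule sum.neutral, rule ballI)
        fix \<tau> assume t: "\<tau> \<in> Th - T i"
        have "\<tau> \<inter> U i = {}" unfolding U_def by (rule mesh_elem_disj[OF mesh Ti[OF i]]) (use t in auto)
        then show "a_elem K \<tau> (vli i) (vli i) = 0"
          by (intro a_elem_zero) (use mesh_facts(2)[OF mesh] t in \<open>auto simp: vli_def ext0_def\<close>)
      qed
      also have "(\<Sum>\<tau>\<in>T i. a_elem K \<tau> (vli i) (vli i)) = ?A ?f ?f"
        unfolding a_sum_def
      proof (rule sum.cong[OF refl])
        fix \<tau> assume t: "\<tau> \<in> T i"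
        have sub: "\<tau> \<subseteq> U i" unfolding U_def by (rule mesh_elem_sub[OF mesh Ti[OF i] t])
        have op: "open \<tau>" using mesh_facts(2)[OF mesh] Ti[OF i] t by blast
        show "a_elem K \<tau> (vli i) (vli i) = a_elem K \<tau> ?f ?f"
          by (rule a_elem_cong[OF op]) (use sub in \<open>auto simp: vli_def ext0_def\<close>)
      qed
      finally show ?thesis by simp
    qed
    have Ar0: "0 \<le> ?A (r i) (r i)" using pA[OF i] rS unfolding psd_def by blast
    consider "\<alpha> = 1" | "\<alpha> = 2" | "\<alpha> = 3" using alpha by blast
    then show ?thesis
    proof cases
      case 1
      have "?A ?f ?f = B i (w i) (w i)" using 1 by (simp add: Bdef)
      also have "\<dots> \<le> ?A (r i) (r i) / \<eta>" by (rule Bw[OF i])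
      finally show ?thesis using 1 ThA by (simp add: C1_def)
    next
      case 2
      let ?Ao = "a_sum K (overlap_elems T P i)" and ?An = "a_sum K (T i - overlap_elems T P i)"
      have split: "\<And>g. ?A g g = ?An g g + ?Ao g g"
        unfolding a_sum_def by (rule sum.subset_diff[OF ovT finT[OF i]])
      have An: "?An ?f ?f = ?An (w i) (w i)"
        unfolding a_sum_def
      proof (rule sum.cong[OF refl])
        fix \<tau> assume t: "\<tau> \<in> T i - overlap_elems T P i"
        have op: "open \<tau>" using mesh_facts(2)[OF mesh] Ti[OF i] t by blast
        have "\<forall>x\<in>\<tau>. chi i (w i) x = w i x" using chi_id i wS[OF i] t unfolding S_def U_def by blast
        then show "a_elem K \<tau> ?f ?f = a_elem K \<tau> (w i) (w i)"
          by (intro a_elem_cong[OF op]) auto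
      qed
      have Ao: "0 \<le> ?Ao (w i) (w i)" using psub[OF i ovT] wS[OF i] unfolding psd_def by blast
      have BB: "B i (w i) (w i) = ?Ao ?f ?f" using 2 by (simp add: Bdef)
      have "?A ?f ?f = B i (w i) (w i) + ?An (w i) (w i)" using split[of ?f] An BB by linarith
      also have "\<dots> \<le> ?A (r i) (r i) / \<eta> + ?A (r i) (r i)"
        using Bw[OF i] Aw[OF i] split[of "w i"] Ao by linarith
      also have "\<dots> = C1 \<alpha> \<eta> * ?A (r i) (r i)" using 2 by (simp add: C1_def algebra_simps)
      finally show ?thesis using ThA by simp
    next
      case 3
      have BB: "B i (w i) (w i) = ?A (w i - ?f) (w i - ?f)" using 3 by (simp add: Bdef)
      have eq: "w i - (w i - ?f) = ?f" by simp
      have "?A ?f ?f \<le> 2 * ?A (w i) (w i) + 2 * ?A (w i - ?f) (w i - ?f)"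
        using par_ineq[OF bA[OF i] pA[OF i] wS[OF i] sub_diff[OF subS wS[OF i] fS] subS] unfolding eq .
      also have "\<dots> \<le> 2 * ?A (r i) (r i) + 2 * (?A (r i) (r i) / \<eta>)"
        using Bw[OF i] Aw[OF i] BB by linarith
      also have "\<dots> = C1 \<alpha> \<eta> * ?A (r i) (r i)" using 3 by (simp add: C1_def algebra_simps)
      finally show ?thesis using ThA by simp
    qed
  qed
  have final: "vl = vlm1 + (\<Sum>i\<in>{1..P}. vli i) \<and> vlm1 \<in> Vlm1 \<and>
            (\<forall>i\<in>{1..P}. vli i \<in> supp_space Vl (subdom (T i))) \<and>
            (\<forall>i\<in>{1..P}. a_sum K Th (vli i) (vli i) \<le> C1 \<alpha> \<eta> * a_sum K (T i) (r i) (r i))"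
    using dec coarse_mem supp energy by blast
  show ?thesis unfolding Let_def
    using final unfolding vlm1_def vli_def w_def Pi_def m_def B_def r_def U_def .
qed


end
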